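(* Given an instance of the Squared Metric Facility Location Problem, let $\alpha$ be the vector of final budgets produced by Algorithm $A1$. Then for every facility $i$, cities $j$ and $j'$, and all positive reals $\beta,\gamma,\delta$, $$ \alpha_j \le \Big(1 + \beta + \frac{1}{\gamma}\Big) \alpha_{j'} + \Big(1 + \gamma + \frac{1}{\delta}\Big) c_{ij'} + \Big(1 + \delta + \frac{1}{\beta} \Big) c_{ij}. $$
   Context: Facility Location instance: finite disjoint sets $C$ (cities), $F$ (facilities), non-negative $c_{ij}$, $f_i$. Squared metric: $\sqrt{c_{ij}}\le \sqrt{c_{ij'}}+\sqrt{c_{i'j'}}+\sqrt{c_{i'j}}$ for all $i,i'\in F$, $j,j'\in C$. Algorithm $A1$: initially all facilities are unopened and all cities unconnected ($U:=C$); each city $j$ has a budget $\alpha_j=0$; an unconnected city $j$ offers $\max(\alpha_j-c_{ij},0)$ to each unopened facility $i$. While $U\ne\emptyset$, the budgets of all unconnected cities increase continuously at the same rate (connected cities' budgets stay fixed) until: (a) for some unconnected $j$ and open $i$, $\alpha_j=c_{ij}$: connect $j$ to $i$ and remove $j$ from $U$; or (b) for some unopened $i$, $\sum_{j\in U}\max(\alpha_j-c_{ij},0)=f_i$: open $i$ and connect to $i$ every unconnected $j$ with $\alpha_j\ge c_{ij}$, removing them from $U$. *)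

theory Defs
  imports Complex_Main
begin

definition squared_metric :: "'c set \<Rightarrow> 'f set \<Rightarrow> ('f \<Rightarrow> 'c \<Rightarrow> real) \<Rightarrow> bool" where
  "squared_metric C F c \<longleftrightarrow>
     (\<forall>i\<in>F. \<forall>i'\<in>F. \<forall>j\<in>C. \<forall>j'\<in>C.
        sqrt (c i j) \<le> sqrt (c i j') + sqrt (c i' j') + sqrt (c i' j))"

text \<open>State of Algorithm A1: (set of open facilities, set U of unconnected cities, budgets alpha).
  Budgets of unconnected cities all grow at the same rate; connected cities keep their budget.\<close>

type_synonym ('c, 'f) A1_state = "'f set \<times> 'c set \<times> ('c \<Rightarrow> real)"

definition A1_event ::
  "'f set \<Rightarrow> ('f \<Rightarrow> 'c \<Rightarrow> real) \<Rightarrow> ('f \<Rightarrow> real) \<Rightarrow> 'f set \<Rightarrow> 'c set \<Rightarrow> ('c \<Rightarrow> real) \<Rightarrow> bool" where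
  "A1_event F c f Op U \<alpha> \<longleftrightarrow>
     (\<exists>j\<in>U. \<exists>i\<in>Op. \<alpha> j = c i j) \<or>
     (\<exists>i\<in>F - Op. (\<Sum>j\<in>U. max (\<alpha> j - c i j) 0) = f i)"

inductive A1_step ::
  "'f set \<Rightarrow> ('f \<Rightarrow> 'c \<Rightarrow> real) \<Rightarrow> ('f \<Rightarrow> real) \<Rightarrow> ('c, 'f) A1_state \<Rightarrow> ('c, 'f) A1_state \<Rightarrow> bool"
  for F c f where
  connect: "\<lbrakk> U \<noteq> {}; j \<in> U; i \<in> Op; \<alpha> j = c i j \<rbrakk>
            \<Longrightarrow> A1_step F c f (Op, U, \<alpha>) (Op, U - {j}, \<alpha>)"
| open_fac: "\<lbrakk> U \<noteq> {}; i \<in> F; i \<notin> Op; (\<Sum>j\<in>U. max (\<alpha> j - c i j) 0) = f i \<rbrakk>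
            \<Longrightarrow> A1_step F c f (Op, U, \<alpha>) (insert i Op, U - {j\<in>U. c i j \<le> \<alpha> j}, \<alpha>)"
| grow: "\<lbrakk> U \<noteq> {}; d > 0;
           \<forall>s. 0 \<le> s \<and> s < d \<longrightarrow>
               \<not> A1_event F c f Op U (\<lambda>j. if j \<in> U then \<alpha> j + s else \<alpha> j) \<rbrakk>
         \<Longrightarrow> A1_step F c f (Op, U, \<alpha>) (Op, U, \<lambda>j. if j \<in> U then \<alpha> j + d else \<alpha> j)"

definition A1_final_budgets ::
  "'c set \<Rightarrow> 'f set \<Rightarrow> ('f \<Rightarrow> 'c \<Rightarrow> real) \<Rightarrow> ('f \<Rightarrow> real) \<Rightarrow> ('c \<Rightarrow> real) \<Rightarrow> bool" where
  "A1_final_budgets C F c f \<alpha> \<longleftrightarrow>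
     (\<exists>Op. (A1_step F c f)\<^sup>*\<^sup>* ({}, C, \<lambda>_. 0) (Op, {}, \<alpha>))"

end

theory Submission
  imports Defs
begin

definition inv1 :: "'c set \<Rightarrow> 'f set \<Rightarrow> ('f \<Rightarrow> 'c \<Rightarrow> real) \<Rightarrow> ('c, 'f) A1_state \<Rightarrow> bool" where
  "inv1 C F c st \<longleftrightarrow> (case st of (Op, U, \<alpha>) \<Rightarrow>
     U \<subseteq> C \<and> Op \<subseteq> F \<and> (\<forall>j. \<alpha> j \<ge> 0) \<and> (\<forall>j\<in>U. \<forall>i\<in>Op. \<alpha> j \<le> c i j)
     \<and> (\<forall>j1\<in>U. \<forall>j2\<in>U. \<alpha> j1 = \<alpha> j2) \<and> (\<forall>j\<in>C-U. \<forall>j0\<in>U. \<alpha> j \<le> \<alpha> j0)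
     \<and> (\<forall>j'\<in>C-U. \<exists>i'\<in>Op. c i' j' \<le> \<alpha> j' \<and> (\<forall>j\<in>C. \<alpha> j \<le> \<alpha> j' \<or> \<alpha> j \<le> c i' j)))"

lemma inv1_iff: "inv1 C F c (Op, U, \<alpha>) \<longleftrightarrow> (U \<subseteq> C \<and> Op \<subseteq> F \<and> (\<forall>j. \<alpha> j \<ge> 0) \<and> (\<forall>j\<in>U. \<forall>i\<in>Op. \<alpha> j \<le> c i j)
     \<and> (\<forall>j1\<in>U. \<forall>j2\<in>U. \<alpha> j1 = \<alpha> j2) \<and> (\<forall>j\<in>C-U. \<forall>j0\<in>U. \<alpha> j \<le> \<alpha> j0)
     \<and> (\<forall>j'\<in>C-U. \<exists>i'\<in>Op. c i' j' \<le> \<alpha> j' \<and> (\<forall>j\<in>C. \<alpha> j \<le> \<alpha> j' \<or> \<alpha> j \<le> c i' j)))"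
  by (simp only: inv1_def prod.case)

lemma step_inv:
  assumes "A1_step F c f st st'" "inv1 C F c st"
  shows "inv1 C F c st'"
  using assms
proof (induction rule: A1_step.induct)
  case (connect U j i Op \<alpha>)
  have P: "U \<subseteq> C" "Op \<subseteq> F" "\<forall>j. \<alpha> j \<ge> 0" "\<forall>j\<in>U. \<forall>i\<in>Op. \<alpha> j \<le> c i j"
     "\<forall>j1\<in>U. \<forall>j2\<in>U. \<alpha> j1 = \<alpha> j2" "\<forall>j\<in>C-U. \<forall>j0\<in>U. \<alpha> j \<le> \<alpha> j0"
     "\<forall>j'\<in>C-U. \<exists>i'\<in>Op. c i' j' \<le> \<alpha> j' \<and> (\<forall>j\<in>C. \<alpha> j \<le> \<alpha> j' \<or> \<alpha> j \<le> c i' j)"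
    using connect.prems[unfolded inv1_iff] apply - apply (elim conjE, assumption)+ done
  have Q: "\<forall>j'\<in>C-(U-{j}). \<exists>i'\<in>Op. c i' j' \<le> \<alpha> j' \<and> (\<forall>j\<in>C. \<alpha> j \<le> \<alpha> j' \<or> \<alpha> j \<le> c i' j)"
  proof
    fix j' assume j': "j' \<in> C - (U - {j})"
    show "\<exists>i'\<in>Op. c i' j' \<le> \<alpha> j' \<and> (\<forall>j\<in>C. \<alpha> j \<le> \<alpha> j' \<or> \<alpha> j \<le> c i' j)"
    proof (cases "j' = j")
      case True
      have "\<forall>k\<in>C. \<alpha> k \<le> \<alpha> j' \<or> \<alpha> k \<le> c i k"
      proof
        fix k assume k: "k \<in> C"
        show "\<alpha> k \<le> \<alpha> j' \<or> \<alpha> k \<le> c i k"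
        proof (cases "k \<in> U")
          case True thus ?thesis using P(4) connect.hyps(3) by simp
        next
          case False
          hence "k \<in> C - U" using k by simp
          thus ?thesis using P(6) connect.hyps(2) \<open>j' = j\<close> by simp
        qed
      qed
      moreover have "c i j' \<le> \<alpha> j'" using connect.hyps(4) True by simp
      ultimately show ?thesis using connect.hyps(3) by blast
    next
      case False
      hence "j' \<in> C - U" using j' by simp
      thus ?thesis using P(7) by simp
    qed
  qed
  have Q1: "U - {j} \<subseteq> C" using P(1) by auto
  have Q2: "\<forall>j\<in>U-{j}. \<forall>i\<in>Op. \<alpha> j \<le> c i j" using P(4) by blast
  have Q3: "\<forall>j1\<in>U-{j}. \<forall>j2\<in>U-{j}. \<alpha> j1 = \<alpha> j2" using P(5) by blast
  have Q4: "\<forall>k\<in>C-(U-{j}). \<forall>j0\<in>U-{j}. \<alpha> k \<le> \<alpha> j0"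
  proof (intro ballI)
    fix k j0 assume k: "k \<in> C-(U-{j})" and j0: "j0 \<in> U-{j}"
    show "\<alpha> k \<le> \<alpha> j0"
    proof (cases "k = j")
      case True thus ?thesis using P(5) j0 connect.hyps(2) by (metis DiffD1 order_refl)
    next
      case False hence "k \<in> C - U" using k by blast
      thus ?thesis using P(6) j0 by blast
    qed
  qed
  show ?case unfolding inv1_def prod.case using P(2,3) Q Q1 Q2 Q3 Q4 by blast
next
  case (open_fac U i Op \<alpha>)
  have P: "U \<subseteq> C" "Op \<subseteq> F" "\<forall>j. \<alpha> j \<ge> 0" "\<forall>j\<in>U. \<forall>i\<in>Op. \<alpha> j \<le> c i j"
     "\<forall>j1\<in>U. \<forall>j2\<in>U. \<alpha> j1 = \<alpha> j2" "\<forall>j\<in>C-U. \<forall>j0\<in>U. \<alpha> j \<le> \<alpha> j0"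
     "\<forall>j'\<in>C-U. \<exists>i'\<in>Op. c i' j' \<le> \<alpha> j' \<and> (\<forall>j\<in>C. \<alpha> j \<le> \<alpha> j' \<or> \<alpha> j \<le> c i' j)"
    using open_fac.prems[unfolded inv1_iff] apply - apply (elim conjE, assumption)+ done
  let ?U = "U - {j\<in>U. c i j \<le> \<alpha> j}"
  have Q1: "\<forall>j\<in>?U. \<forall>i'\<in>insert i Op. \<alpha> j \<le> c i' j" using P(4) by auto
  have Q2: "\<forall>j\<in>C-?U. \<forall>j0\<in>?U. \<alpha> j \<le> \<alpha> j0"
  proof (intro ballI)
    fix j j0 assume j: "j \<in> C - ?U" and j0: "j0 \<in> ?U"
    show "\<alpha> j \<le> \<alpha> j0"
    proof (cases "j \<in> U")
      case True thus ?thesis using P(5) j0 by (metis DiffD1 order_refl)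
    next
      case False thus ?thesis using P(6) j j0 by auto
    qed
  qed
  have Q: "\<forall>j'\<in>C-?U. \<exists>i'\<in>insert i Op. c i' j' \<le> \<alpha> j' \<and> (\<forall>j\<in>C. \<alpha> j \<le> \<alpha> j' \<or> \<alpha> j \<le> c i' j)"
  proof
    fix j' assume j': "j' \<in> C - ?U"
    show "\<exists>i'\<in>insert i Op. c i' j' \<le> \<alpha> j' \<and> (\<forall>j\<in>C. \<alpha> j \<le> \<alpha> j' \<or> \<alpha> j \<le> c i' j)"
    proof (cases "j' \<in> U")
      case True
      hence cj: "c i j' \<le> \<alpha> j'" using j' by auto
      have "\<forall>k\<in>C. \<alpha> k \<le> \<alpha> j' \<or> \<alpha> k \<le> c i k"
      proof
        fix k assume k: "k \<in> C"
        show "\<alpha> k \<le> \<alpha> j' \<or> \<alpha> k \<le> c i k"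
        proof (cases "k \<in> U")
          case True thus ?thesis using P(5) \<open>j' \<in> U\<close> by (metis order_refl)
        next
          case False thus ?thesis using P(6) k \<open>j' \<in> U\<close> by blast
        qed
      qed
      thus ?thesis using cj by blast
    next
      case False thus ?thesis using P(7) j' by blast
    qed
  qed
  have Q3: "\<forall>j1\<in>?U. \<forall>j2\<in>?U. \<alpha> j1 = \<alpha> j2" using P(5) by blast
  have Q4: "insert i Op \<subseteq> F" "?U \<subseteq> C" using P(1,2) open_fac.hyps(2) by auto
  show ?case unfolding inv1_def prod.case using P(3) Q Q1 Q2 Q3 Q4 by blast
next
  case (grow U d Op \<alpha>)
  have P: "U \<subseteq> C" "Op \<subseteq> F" "\<forall>j. \<alpha> j \<ge> 0" "\<forall>j\<in>U. \<forall>i\<in>Op. \<alpha> j \<le> c i j"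
     "\<forall>j1\<in>U. \<forall>j2\<in>U. \<alpha> j1 = \<alpha> j2" "\<forall>j\<in>C-U. \<forall>j0\<in>U. \<alpha> j \<le> \<alpha> j0"
     "\<forall>j'\<in>C-U. \<exists>i'\<in>Op. c i' j' \<le> \<alpha> j' \<and> (\<forall>j\<in>C. \<alpha> j \<le> \<alpha> j' \<or> \<alpha> j \<le> c i' j)"
    using grow.prems[unfolded inv1_iff] apply - apply (elim conjE, assumption)+ done
  define \<alpha>' where "\<alpha>' = (\<lambda>j. if j \<in> U then \<alpha> j + d else \<alpha> j)"
  have aU: "\<alpha>' j = \<alpha> j + d" if "j \<in> U" for j using that unfolding \<alpha>'_def by simp
  have aN: "\<alpha>' j = \<alpha> j" if "j \<notin> U" for j using that unfolding \<alpha>'_def by simp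
  have I1: "\<alpha> j + d \<le> c i j" if "j \<in> U" "i \<in> Op" for i j
  proof (rule ccontr)
    assume nt: "\<not> \<alpha> j + d \<le> c i j"
    have le: "\<alpha> j \<le> c i j" using P(4) that by blast
    define s0 where "s0 = c i j - \<alpha> j"
    define g where "g = (\<lambda>k. if k \<in> U then \<alpha> k + s0 else \<alpha> k)"
    have "g j = c i j" using that unfolding g_def s0_def by simp
    hence "\<exists>jj\<in>U. \<exists>ii\<in>Op. g jj = c ii jj" using that by blast
    hence ev: "A1_event F c f Op U g" unfolding A1_event_def by (rule disjI1)
    have "0 \<le> s0" "s0 < d" using le nt unfolding s0_def by linarith+
    from grow.hyps(3)[rule_format, OF conjI[OF this]] have "\<not> A1_event F c f Op U g" unfolding g_def .
    thus False using ev by contradiction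
  qed
  have R1: "\<forall>j\<in>U. \<forall>i\<in>Op. \<alpha>' j \<le> c i j" using I1 aU by simp
  have R0: "\<forall>j. \<alpha>' j \<ge> 0"
  proof
    fix j show "\<alpha>' j \<ge> 0" using P(3) grow.hyps(2) aU[of j] aN[of j]
      by (cases "j \<in> U") (simp_all add: add_nonneg_nonneg)
  qed
  have R2: "\<forall>j1\<in>U. \<forall>j2\<in>U. \<alpha>' j1 = \<alpha>' j2"
  proof (intro ballI)
    fix j1 j2 assume a: "j1 \<in> U" "j2 \<in> U"
    hence "\<alpha> j1 = \<alpha> j2" using P(5) by blast
    thus "\<alpha>' j1 = \<alpha>' j2" using aU a by simp
  qed
  have R3: "\<forall>j\<in>C-U. \<forall>j0\<in>U. \<alpha>' j \<le> \<alpha>' j0"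
  proof (intro ballI)
    fix j j0 assume a: "j \<in> C-U" "j0 \<in> U"
    hence "\<alpha> j \<le> \<alpha> j0" using P(6) by blast
    thus "\<alpha>' j \<le> \<alpha>' j0" using aU[of j0] aN[of j] a grow.hyps(2) by simp
  qed
  have R4: "\<forall>j'\<in>C-U. \<exists>i'\<in>Op. c i' j' \<le> \<alpha>' j' \<and> (\<forall>j\<in>C. \<alpha>' j \<le> \<alpha>' j' \<or> \<alpha>' j \<le> c i' j)"
  proof
    fix j' assume j': "j' \<in> C - U"
    obtain i' where i': "i' \<in> Op" "c i' j' \<le> \<alpha> j'" "\<forall>j\<in>C. \<alpha> j \<le> \<alpha> j' \<or> \<alpha> j \<le> c i' j"
      using P(7) j' by blast
    have aj': "\<alpha>' j' = \<alpha> j'" using aN j' by simp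
    have "\<forall>j\<in>C. \<alpha>' j \<le> \<alpha>' j' \<or> \<alpha>' j \<le> c i' j"
    proof
      fix j assume j: "j \<in> C"
      show "\<alpha>' j \<le> \<alpha>' j' \<or> \<alpha>' j \<le> c i' j"
      proof (cases "j \<in> U")
        case True thus ?thesis using I1[OF True i'(1)] aU[OF True] by simp
      next
        case False thus ?thesis using i'(3) j aN[OF False] aj' by simp
      qed
    qed
    moreover have "c i' j' \<le> \<alpha>' j'" using i'(2) aj' by simp
    ultimately show "\<exists>i'\<in>Op. c i' j' \<le> \<alpha>' j' \<and> (\<forall>j\<in>C. \<alpha>' j \<le> \<alpha>' j' \<or> \<alpha>' j \<le> c i' j)"
      using i'(1) by blast
  qed
  have "inv1 C F c (Op, U, \<alpha>')" unfolding inv1_iff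
    using P(1,2) R0 R1 R2 R3 R4 by (intro conjI)
  thus ?case unfolding \<alpha>'_def .
qed

lemma reach_inv:
  assumes "(A1_step F c f)\<^sup>*\<^sup>* st st'" "inv1 C F c st"
  shows "inv1 C F c st'"
  using assms by (induction rule: rtranclp_induct) (auto intro: step_inv)

lemma two_ab: "(t::real) > 0 \<Longrightarrow> 2*x*y \<le> t*x^2 + y^2/t"
proof -
  assume t: "t > 0"
  have "0 \<le> (t*x - y)^2" by simp
  hence "2*t*x*y \<le> t*(t*x^2) + y^2" by (simp add: power2_eq_square algebra_simps)
  hence "t*(2*x*y) \<le> t*(t*x^2 + y^2/t)" using t by (simp add: algebra_simps)
  thus ?thesis using t by (simp add: mult_le_cancel_left)
qed

theorem lemma3:
  fixes C :: "'c set" and F :: "'f set" and c :: "'f \<Rightarrow> 'c \<Rightarrow> real" and f :: "'f \<Rightarrow> real"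
    and \<alpha> :: "'c \<Rightarrow> real" and \<beta> \<gamma> \<delta> :: real
  assumes "finite C" and "finite F"
    and "\<forall>i\<in>F. \<forall>j\<in>C. c i j \<ge> 0" and "\<forall>i\<in>F. f i \<ge> 0"
    and "squared_metric C F c"
    and "A1_final_budgets C F c f \<alpha>"
    and "i \<in> F" and "j \<in> C" and "j' \<in> C"
    and "\<beta> > 0" and "\<gamma> > 0" and "\<delta> > 0"
  shows "\<alpha> j \<le> (1 + \<beta> + 1/\<gamma>) * \<alpha> j' + (1 + \<gamma> + 1/\<delta>) * c i j' + (1 + \<delta> + 1/\<beta>) * c i j"
proof -
  obtain Op where r: "(A1_step F c f)\<^sup>*\<^sup>* ({}, C, \<lambda>_. 0) (Op, {}, \<alpha>)"
    using assms(6) unfolding A1_final_budgets_def by auto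
  have "inv1 C F c ({}, C, \<lambda>_. 0)" unfolding inv1_def by auto
  from reach_inv[OF r this] have I: "Op \<subseteq> F" "\<forall>j. \<alpha> j \<ge> 0"
    "\<forall>j'\<in>C. \<exists>i'\<in>Op. c i' j' \<le> \<alpha> j' \<and> (\<forall>j\<in>C. \<alpha> j \<le> \<alpha> j' \<or> \<alpha> j \<le> c i' j)"
    unfolding inv1_def prod.case by blast+
  obtain i' where i': "i' \<in> F" "c i' j' \<le> \<alpha> j'" "\<alpha> j \<le> \<alpha> j' \<or> \<alpha> j \<le> c i' j"
    using I(1,3) assms(8,9) by blast
  have cij: "c i j \<ge> 0" "c i j' \<ge> 0" "c i' j \<ge> 0" "c i' j' \<ge> 0"
    using assms(3,7,8,9) i'(1) by auto
  have aj': "\<alpha> j' \<ge> 0" "\<alpha> j \<ge> 0" using I(2) by auto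
  have coef: "1 + \<beta> + 1/\<gamma> \<ge> 1" "1 + \<gamma> + 1/\<delta> \<ge> 0" "1 + \<delta> + 1/\<beta> \<ge> 0"
    using assms(10-12) by auto
  show ?thesis
  proof (cases "\<alpha> j \<le> \<alpha> j'")
    case True
    have "\<alpha> j' \<le> (1 + \<beta> + 1/\<gamma>) * \<alpha> j'" using coef(1) aj' by (simp add: mult_le_cancel_right1)
    moreover have "0 \<le> (1 + \<gamma> + 1/\<delta>) * c i j'" "0 \<le> (1 + \<delta> + 1/\<beta>) * c i j"
      using coef cij by auto
    ultimately show ?thesis using True by linarith
  next
    case False
    with i' have a1: "\<alpha> j \<le> c i' j" by auto
    have "sqrt (c i' j) \<le> sqrt (c i' j') + sqrt (c i j') + sqrt (c i j)"
      using assms(5) i'(1) assms(7,8,9) unfolding squared_metric_def by blast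
    moreover have "sqrt (c i' j') \<le> sqrt (\<alpha> j')" using i'(2) by simp
    moreover have "sqrt (\<alpha> j) \<le> sqrt (c i' j)" using a1 by simp
    ultimately have s: "sqrt (\<alpha> j) \<le> sqrt (\<alpha> j') + sqrt (c i j') + sqrt (c i j)" by linarith
    define A where "A = sqrt (\<alpha> j')"
    define B where "B = sqrt (c i j')"
    define D where "D = sqrt (c i j)"
    have pos: "A \<ge> 0" "B \<ge> 0" "D \<ge> 0" using aj' cij unfolding A_def B_def D_def by auto
    have sq: "A^2 = \<alpha> j'" "B^2 = c i j'" "D^2 = c i j" "(sqrt (\<alpha> j))^2 = \<alpha> j"
      using aj' cij unfolding A_def B_def D_def by auto
    have "\<alpha> j \<le> (A + B + D)^2"
    proof -
      have "sqrt (\<alpha> j) \<le> A + B + D" using s unfolding A_def B_def D_def .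
      hence "(sqrt (\<alpha> j))^2 \<le> (A+B+D)^2" by (rule power_mono) (simp add: aj')
      thus ?thesis using sq(4) by simp
    qed
    also have "\<dots> = A^2 + B^2 + D^2 + 2*A*B + 2*B*D + 2*A*D"
      by (simp add: power2_eq_square algebra_simps)
    also have "\<dots> \<le> A^2 + B^2 + D^2 + (\<gamma>*B^2 + A^2/\<gamma>) + (\<delta>*D^2 + B^2/\<delta>) + (\<beta>*A^2 + D^2/\<beta>)"
      using two_ab[OF assms(11), of B A] two_ab[OF assms(12), of D B] two_ab[OF assms(10), of A D]
      by (simp add: algebra_simps)
    also have "\<dots> = (1 + \<beta> + 1/\<gamma>) * A^2 + (1 + \<gamma> + 1/\<delta>) * B^2 + (1 + \<delta> + 1/\<beta>) * D^2"
      by (simp add: algebra_simps)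
    finally show ?thesis using sq by simp
  qed
qed

end
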